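(* Let $A$ be a quantifier-free formula of $\mathbf{L}$ (i.e. a formula of $\mathbf{L_1}$). If $A$ is a theorem of $\mathbf{L}$, then $\vdash_H A$. That is, $\mathbf{L}$ is a conservative extension of the Hilbert-type $\mathbf{L_1}$.
   Context: Formulas of $\mathbf{L_1}$: built from atomic formulas $\epsilon ab$ ($a,b$ name variables, possibly equal) with primitive connectives $\vee,\sim$; $\wedge,\supset,\equiv$ defined as usual. $\vdash_H A$: $A$ belongs to the smallest set containing all instances of classical propositional tautologies and all formulas $\epsilon ab\supset\epsilon aa$, $(\epsilon ab\wedge\epsilon bc)\supset\epsilon ac$, $(\epsilon ab\wedge\epsilon bb)\supset\epsilon ba$, closed under modus ponens. Leśniewski's elementary ontology $\mathbf{L}$: the first-order theory (in classical first-order predicate logic without equality) whose language has the name variables as individual variables and a single binary predicate $\epsilon$, with the axiom (universal closure of) $\epsilon ab\equiv\big(\exists x(\epsilon xa\wedge\epsilon xb)\wedge\forall x\forall y(\epsilon xa\wedge\epsilon ya\supset\epsilon xy)\big)$. Formulas of $\mathbf{L_1}$ are exactly the quantifier-free formulas of $\mathbf{L}$. *)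

theory Defs
  imports Main
begin

datatype form = Eps nat nat | Neg form | Disj form form | Ex nat form

definition Imp :: "form \<Rightarrow> form \<Rightarrow> form" where "Imp A B = Disj (Neg A) B"
definition Conj :: "form \<Rightarrow> form \<Rightarrow> form" where "Conj A B = Neg (Disj (Neg A) (Neg B))"
definition Iff :: "form \<Rightarrow> form \<Rightarrow> form" where "Iff A B = Conj (Imp A B) (Imp B A)"
definition All :: "nat \<Rightarrow> form \<Rightarrow> form" where "All x A = Neg (Ex x (Neg A))"

fun qfree :: "form \<Rightarrow> bool" where
  "qfree (Eps a b) = True"
| "qfree (Neg A) = qfree A"
| "qfree (Disj A B) = (qfree A \<and> qfree B)"
| "qfree (Ex x A) = False"

fun free :: "form \<Rightarrow> nat set" where
  "free (Eps a b) = {a, b}"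
| "free (Neg A) = free A"
| "free (Disj A B) = free A \<union> free B"
| "free (Ex x A) = free A - {x}"

fun subst :: "nat \<Rightarrow> nat \<Rightarrow> form \<Rightarrow> form" where
  "subst y x (Eps a b) = Eps (if a = x then y else a) (if b = x then y else b)"
| "subst y x (Neg A) = Neg (subst y x A)"
| "subst y x (Disj A B) = Disj (subst y x A) (subst y x B)"
| "subst y x (Ex z A) = (if z = x then Ex z A else Ex z (subst y x A))"

fun free_for :: "nat \<Rightarrow> nat \<Rightarrow> form \<Rightarrow> bool" where
  "free_for y x (Eps a b) = True"
| "free_for y x (Neg A) = free_for y x A"
| "free_for y x (Disj A B) = (free_for y x A \<and> free_for y x B)"
| "free_for y x (Ex z A) = (z = x \<or> x \<notin> free A \<or> (z \<noteq> y \<and> free_for y x A))"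

datatype pform = PVar nat | PNeg pform | PDisj pform pform

fun peval :: "(nat \<Rightarrow> bool) \<Rightarrow> pform \<Rightarrow> bool" where
  "peval v (PVar n) = v n"
| "peval v (PNeg P) = (\<not> peval v P)"
| "peval v (PDisj P Q) = (peval v P \<or> peval v Q)"

definition ptaut :: "pform \<Rightarrow> bool" where "ptaut P \<longleftrightarrow> (\<forall>v. peval v P)"

fun inst :: "(nat \<Rightarrow> form) \<Rightarrow> pform \<Rightarrow> form" where
  "inst \<sigma> (PVar n) = \<sigma> n"
| "inst \<sigma> (PNeg P) = Neg (inst \<sigma> P)"
| "inst \<sigma> (PDisj P Q) = Disj (inst \<sigma> P) (inst \<sigma> Q)"

definition taut_inst :: "form \<Rightarrow> bool" where
  "taut_inst A \<longleftrightarrow> (\<exists>P \<sigma>. ptaut P \<and> A = inst \<sigma> P)"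

inductive H :: "form \<Rightarrow> bool" where
  H_taut: "qfree A \<Longrightarrow> taut_inst A \<Longrightarrow> H A"
| H_ax1: "H (Imp (Eps a b) (Eps a a))"
| H_ax2: "H (Imp (Conj (Eps a b) (Eps b c)) (Eps a c))"
| H_ax3: "H (Imp (Conj (Eps a b) (Eps b b)) (Eps b a))"
| H_mp: "H A \<Longrightarrow> H (Imp A B) \<Longrightarrow> H B"

definition onto_ax :: "nat \<Rightarrow> nat \<Rightarrow> nat \<Rightarrow> nat \<Rightarrow> form" where
  "onto_ax a b x y = Iff (Eps a b)
     (Conj (Ex x (Conj (Eps x a) (Eps x b)))
           (All x (All y (Imp (Conj (Eps x a) (Eps y a)) (Eps x y)))))"

inductive thmL :: "form \<Rightarrow> bool" where
  L_taut: "taut_inst A \<Longrightarrow> thmL A"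
| L_inst: "free_for y x A \<Longrightarrow> thmL (Imp (All x A) (subst y x A))"
| L_allimp: "x \<notin> free A \<Longrightarrow> thmL (Imp (All x (Imp A B)) (Imp A (All x B)))"
| L_onto: "x \<noteq> y \<Longrightarrow> x \<notin> {a, b} \<Longrightarrow> y \<notin> {a, b} \<Longrightarrow> thmL (onto_ax a b x y)"
| L_mp: "thmL A \<Longrightarrow> thmL (Imp A B) \<Longrightarrow> thmL B"
| L_gen: "thmL A \<Longrightarrow> thmL (All x A)"

end

theory Submission
  imports Defs "HOL-Library.Nat_Bijection"
begin

fun eval :: "('d \<Rightarrow> 'd \<Rightarrow> bool) \<Rightarrow> (nat \<Rightarrow> 'd) \<Rightarrow> form \<Rightarrow> bool" where
  "eval R s (Eps a b) = R (s a) (s b)"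
| "eval R s (Neg A) = (\<not> eval R s A)"
| "eval R s (Disj A B) = (eval R s A \<or> eval R s B)"
| "eval R s (Ex x A) = (\<exists>d. eval R (s(x:=d)) A)"

lemma eval_defs[simp]:
  "eval R s (Imp A B) = (eval R s A \<longrightarrow> eval R s B)"
  "eval R s (Conj A B) = (eval R s A \<and> eval R s B)"
  "eval R s (Iff A B) = (eval R s A \<longleftrightarrow> eval R s B)"
  "eval R s (All x A) = (\<forall>d. eval R (s(x:=d)) A)"
  by (auto simp: Imp_def Conj_def Iff_def All_def)

lemma eval_cong: "(\<forall>v\<in>free A. s v = s' v) \<Longrightarrow> eval R s A = eval R s' A"
proof (induction A arbitrary: s s')
  case (Ex x A)
  have "\<And>d. eval R (s(x:=d)) A = eval R (s'(x:=d)) A"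
    using Ex by (intro Ex.IH) auto
  then show ?case by simp
next
  case (Disj A1 A2)
  then show ?case by (metis Un_iff eval.simps(3) free.simps(3))
qed auto

lemma subst_nofree: "x \<notin> free A \<Longrightarrow> subst y x A = A"
  by (induction A) auto

lemma eval_subst: "free_for y x A \<Longrightarrow> eval R s (subst y x A) = eval R (s(x := s y)) A"
proof (induction A arbitrary: s)
  case (Ex z A)
  show ?case
  proof (cases "z = x")
    case True
    have "eval R (s(x:=s y)) (Ex x A) = eval R s (Ex x A)" by (rule eval_cong) simp
    moreover have "subst y x (Ex x A) = Ex x A" by simp
    ultimately show ?thesis using True by metis
  next
    case False
    show ?thesis
    proof (cases "x \<in> free A")
      case False2: False
      then have "subst y x (Ex z A) = Ex z A" by (simp add: subst_nofree)
      moreover have "eval R s (Ex z A) = eval R (s(x := s y)) (Ex z A)"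
        by (rule eval_cong) (use False2 in auto)
      ultimately show ?thesis by metis
    next
      case True
      with Ex.prems False have zy: "z \<noteq> y" and ff: "free_for y x A" by auto
      have "\<And>d. eval R (s(z:=d)) (subst y x A) = eval R (s(x := s y, z:=d)) A"
      proof -
        fix d
        have e: "(s(z:=d))(x := (s(z:=d)) y) = s(x := s y, z := d)"
          using zy False by (auto simp: fun_eq_iff)
        show "eval R (s(z:=d)) (subst y x A) = eval R (s(x := s y, z:=d)) A"
          using Ex.IH[OF ff, of "s(z:=d)"] e by metis
      qed
      moreover have "subst y x (Ex z A) = Ex z (subst y x A)" using False by simp
      ultimately show ?thesis by (simp only: eval.simps)
    qed
  qed
qed auto

lemma eval_inst: "eval R s (inst \<sigma> P) = peval (\<lambda>n. eval R s (\<sigma> n)) P"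
  by (induction P) auto

definition onto :: "('d \<Rightarrow> 'd \<Rightarrow> bool) \<Rightarrow> bool" where
  "onto R \<longleftrightarrow> (\<forall>X Y. R X Y \<longleftrightarrow> ((\<exists>Z. R Z X \<and> R Z Y) \<and> (\<forall>Z W. R Z X \<and> R W X \<longrightarrow> R Z W)))"

lemma soundness: "thmL A \<Longrightarrow> onto R \<Longrightarrow> eval R s A"
proof (induction A arbitrary: s rule: thmL.induct)
  case (L_taut A)
  then obtain P \<sigma> where "ptaut P" "A = inst \<sigma> P" by (auto simp: taut_inst_def)
  then show ?case by (simp add: eval_inst ptaut_def)
next
  case (L_inst y x A)
  then show ?case by (auto simp: eval_subst)
next
  case (L_allimp x A B)
  have "\<And>d. eval R (s(x:=d)) A = eval R s A"
    by (rule eval_cong) (use L_allimp in auto)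
  then show ?case by auto
next
  case (L_onto x y a b)
  then have "x \<noteq> a" "x \<noteq> b" "y \<noteq> a" "y \<noteq> b" by auto
  then have key: "eval R s (onto_ax a b x y) \<longleftrightarrow> (R (s a) (s b) \<longleftrightarrow>
     ((\<exists>d. R d (s a) \<and> R d (s b)) \<and> (\<forall>d e. R d (s a) \<and> R e (s a) \<longrightarrow> R d e)))"
    using L_onto(1) by (simp add: onto_ax_def)
  show ?case unfolding key using L_onto(4) unfolding onto_def by blast
qed auto

lemma eval_qfree: "qfree A \<Longrightarrow> eval R s A = eval (\<lambda>a b. R (s a) (s b)) id A"
  by (induction A) auto

lemma eval_qcong: "qfree A \<Longrightarrow> (\<forall>a\<in>free A. \<forall>b\<in>free A. r a b = r' a b) \<Longrightarrow> eval r id A = eval r' id A"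
  by (induction A) auto

fun toP :: "form \<Rightarrow> pform" where
  "toP (Eps a b) = PVar (prod_encode (a,b))"
| "toP (Neg A) = PNeg (toP A)"
| "toP (Disj A B) = PDisj (toP A) (toP B)"
| "toP (Ex x A) = PVar 0"

definition sig :: "nat \<Rightarrow> form" where
  "sig n = (case prod_decode n of (a,b) \<Rightarrow> Eps a b)"

lemma inst_toP: "qfree F \<Longrightarrow> inst sig (toP F) = F"
  by (induction F) (auto simp: sig_def)

lemma peval_toP: "qfree F \<Longrightarrow> peval v (toP F) = eval (\<lambda>a b. v (prod_encode (a,b))) id F"
  by (induction F) auto

lemma taut_of_valid: "qfree F \<Longrightarrow> (\<forall>r. eval r id F) \<Longrightarrow> H F"
  apply (rule H_taut, assumption)
  unfolding taut_inst_def ptaut_def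
  apply (rule exI[of _ "toP F"], rule exI[of _ sig])
  by (simp add: inst_toP peval_toP)

fun impls :: "form list \<Rightarrow> form \<Rightarrow> form" where
  "impls [] A = A"
| "impls (B#Bs) A = Imp B (impls Bs A)"

lemma impls_qfree: "\<forall>B\<in>set Bs. qfree B \<Longrightarrow> qfree A \<Longrightarrow> qfree (impls Bs A)"
  by (induction Bs) (auto simp: Imp_def)

lemma impls_eval: "eval R s (impls Bs A) = ((\<forall>B\<in>set Bs. eval R s B) \<longrightarrow> eval R s A)"
  by (induction Bs) auto

lemma impls_H: "H (impls Bs A) \<Longrightarrow> \<forall>B\<in>set Bs. H B \<Longrightarrow> H A"
  by (induction Bs) (auto intro: H_mp)

lemma finite_free: "finite (free A)"
  by (induction A) auto

definition Ax :: "nat list \<Rightarrow> form list" where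
  "Ax vs = [Imp (Eps a b) (Eps a a). a\<leftarrow>vs, b\<leftarrow>vs]
         @ [Imp (Conj (Eps a b) (Eps b c)) (Eps a c). a\<leftarrow>vs, b\<leftarrow>vs, c\<leftarrow>vs]
         @ [Imp (Conj (Eps a b) (Eps b b)) (Eps b a). a\<leftarrow>vs, b\<leftarrow>vs]"

definition axr :: "(nat \<Rightarrow> nat \<Rightarrow> bool) \<Rightarrow> bool" where
  "axr r \<longleftrightarrow> (\<forall>a b. r a b \<longrightarrow> r a a) \<and> (\<forall>a b c. r a b \<and> r b c \<longrightarrow> r a c)
     \<and> (\<forall>a b. r a b \<and> r b b \<longrightarrow> r b a)"

lemma completeness:
  assumes q: "qfree A" and v: "\<And>r. axr r \<Longrightarrow> eval r id A"
  shows "H A"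
proof -
  obtain vs where vs: "set vs = free A" using finite_list[OF finite_free[of A]] by blast
  have axH: "\<forall>B\<in>set (Ax vs). H B" unfolding Ax_def by (auto intro: H_ax1 H_ax2 H_ax3)
  have axq: "\<forall>B\<in>set (Ax vs). qfree B" by (auto simp: Ax_def Imp_def Conj_def)
  have "H (impls (Ax vs) A)"
  proof (rule taut_of_valid)
    show "qfree (impls (Ax vs) A)" by (rule impls_qfree[OF axq q])
    show "\<forall>r. eval r id (impls (Ax vs) A)"
    proof
      fix r :: "nat \<Rightarrow> nat \<Rightarrow> bool"
      show "eval r id (impls (Ax vs) A)"
        unfolding impls_eval
      proof
        assume h: "\<forall>B\<in>set (Ax vs). eval r id B"
        define V where "V = set vs"
        have m1: "Imp (Eps a b) (Eps a a) \<in> set (Ax vs)" if "a \<in> V" "b \<in> V" for a b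
          using that unfolding Ax_def V_def by auto
        have m2: "Imp (Conj (Eps a b) (Eps b c)) (Eps a c) \<in> set (Ax vs)" if "a \<in> V" "b \<in> V" "c \<in> V" for a b c
          using that unfolding Ax_def V_def by auto
        have m3: "Imp (Conj (Eps a b) (Eps b b)) (Eps b a) \<in> set (Ax vs)" if "a \<in> V" "b \<in> V" for a b
          using that unfolding Ax_def V_def by auto
        have h1: "\<And>a b. a \<in> V \<Longrightarrow> b \<in> V \<Longrightarrow> r a b \<Longrightarrow> r a a"
          using h m1 by fastforce
        have h2: "\<And>a b c. a \<in> V \<Longrightarrow> b \<in> V \<Longrightarrow> c \<in> V \<Longrightarrow> r a b \<Longrightarrow> r b c \<Longrightarrow> r a c"
          using h m2 by fastforce
        have h3: "\<And>a b. a \<in> V \<Longrightarrow> b \<in> V \<Longrightarrow> r a b \<Longrightarrow> r b b \<Longrightarrow> r b a"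
          using h m3 by fastforce
        define r' where "r' a b = (a \<in> V \<and> b \<in> V \<and> r a b)" for a b
        have "axr r'" unfolding axr_def r'_def using h1 h2 h3 by blast
        then have "eval r' id A" by (rule v)
        moreover have "eval r' id A = eval r id A"
          by (rule eval_qcong[OF q]) (auto simp: r'_def V_def vs)
        ultimately show "eval r id A" by simp
      qed
    qed
  qed
  then show ?thesis using axH by (rule impls_H)
qed

definition Rset :: "'u set \<Rightarrow> 'u set \<Rightarrow> bool" where
  "Rset X Y \<longleftrightarrow> (\<exists>i. X = {i} \<and> i \<in> Y)"

lemma onto_Rset: "onto Rset"
  unfolding onto_def
proof (intro allI iffI)
  fix X Y :: "'a set"
  assume "Rset X Y"
  then obtain i where i: "X = {i}" "i \<in> Y" by (auto simp: Rset_def)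
  have "\<exists>Z. Rset Z X \<and> Rset Z Y"
    by (rule exI[of _ "{i}"]) (simp add: Rset_def i)
  moreover have "\<forall>Z W. Rset Z X \<and> Rset W X \<longrightarrow> Rset Z W"
  proof (intro allI impI)
    fix Z W assume "Rset Z X \<and> Rset W X"
    then obtain j k where "Z = {j}" "j \<in> X" "W = {k}" "k \<in> X" by (auto simp: Rset_def)
    then show "Rset Z W" using i by (simp add: Rset_def)
  qed
  ultimately show "(\<exists>Z. Rset Z X \<and> Rset Z Y) \<and> (\<forall>Z W. Rset Z X \<and> Rset W X \<longrightarrow> Rset Z W)" by blast
next
  fix X Y :: "'a set"
  assume h: "(\<exists>Z. Rset Z X \<and> Rset Z Y) \<and> (\<forall>Z W. Rset Z X \<and> Rset W X \<longrightarrow> Rset Z W)"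
  then obtain Z where "Rset Z X" "Rset Z Y" by blast
  then obtain j where j: "j \<in> X" "j \<in> Y" unfolding Rset_def by blast
  have "k = j" if k: "k \<in> X" for k
  proof -
    have "Rset {j} X" "Rset {k} X" using j k by (auto simp: Rset_def)
    then have "Rset {j} {k}" using h by blast
    then show "k = j" by (auto simp: Rset_def)
  qed
  then have "X = {j}" using j by blast
  with j show "Rset X Y" by (auto simp: Rset_def)
qed

definition ind :: "(nat \<Rightarrow> nat \<Rightarrow> bool) \<Rightarrow> nat \<Rightarrow> nat set" where
  "ind r a = {c. r a c}"

definition smod :: "(nat \<Rightarrow> nat \<Rightarrow> bool) \<Rightarrow> nat \<Rightarrow> (nat set + nat \<times> bool) set" where
  "smod r b = Inl ` {ind r a | a. r a b} \<union> (if r b b then {} else {Inr (b,True), Inr (b,False)})"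

lemma model_rep:
  assumes "axr r"
  shows "r c b = Rset (smod r c) (smod r b)"
proof (cases "r c c")
  case True
  have ax1: "\<And>a b. r a b \<Longrightarrow> r a a" and ax2: "\<And>a b c. r a b \<Longrightarrow> r b c \<Longrightarrow> r a c"
    and ax3: "\<And>a b. r a b \<Longrightarrow> r b b \<Longrightarrow> r b a" using assms unfolding axr_def by blast+
  have eq: "\<And>a. r a c \<Longrightarrow> ind r a = ind r c"
  proof -
    fix a assume rac: "r a c"
    then have rca: "r c a" using ax3 True by blast
    show "ind r a = ind r c" unfolding ind_def
    proof (intro Collect_cong iffI)
      fix d assume "r a d" then show "r c d" using rca ax2 by blast
    next
      fix d assume "r c d" then show "r a d" using rac ax2 by blast
    qed
  qed
  have "{ind r a | a. r a c} = {ind r c}"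
  proof
    show "{ind r a | a. r a c} \<subseteq> {ind r c}" using eq by blast
    show "{ind r c} \<subseteq> {ind r a | a. r a c}" using True by blast
  qed
  then have sc: "smod r c = {Inl (ind r c)}" using True by (simp add: smod_def)
  have "Inl (ind r c) \<in> smod r b \<longleftrightarrow> r c b"
  proof
    assume "Inl (ind r c) \<in> smod r b"
    then obtain a where a: "ind r c = ind r a" "r a b" by (auto simp: smod_def split: if_splits)
    then have "r a c" using True unfolding ind_def by blast
    then have "r c a" using ax3 True by blast
    then show "r c b" using ax2 a by blast
  qed (auto simp: smod_def)
  then show ?thesis using sc by (simp add: Rset_def)
next
  case False
  then have "\<not> r c b" using assms unfolding axr_def by blast
  moreover have "\<not> (\<exists>i. smod r c = {i})"
  proof
    assume "\<exists>i. smod r c = {i}"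
    then obtain i where "smod r c = {i}" by blast
    moreover have "Inr (c,True) \<in> smod r c" "Inr (c,False) \<in> smod r c"
      using False by (auto simp: smod_def)
    ultimately show False by auto
  qed
  ultimately show ?thesis by (auto simp: Rset_def)
qed

theorem theorem6p5:
  assumes "qfree A" and "thmL A"
  shows "H A"
proof (rule completeness[OF assms(1)])
  fix r assume ar: "axr r"
  have "eval Rset (smod r) A" using soundness[OF assms(2) onto_Rset] .
  then have "eval (\<lambda>a b. Rset (smod r a) (smod r b)) id A"
    using eval_qfree[OF assms(1)] by blast
  moreover have "(\<lambda>a b. Rset (smod r a) (smod r b)) = r"
    using model_rep[OF ar] by (intro ext) simp
  ultimately show "eval r id A" by simp
qed

end
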